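(* Let $z = \frac{a + b\sqrt{-D}}{c} \in G_D(\mathbb{Q})$ where $\gcd(a,b) = 1$ and $c > 1$, and let $c = p_1^{\alpha_1} \cdots p_k^{\alpha_k}$ be the prime factorization of $c$. Then each $p_i$ is an odd prime with $\left(\frac{-D}{p_i}\right)=1$ (so $\zeta_{p_i}$ is defined), and $$z \ = \ \pm \zeta_{p_1}^{\pm \alpha_1}\cdots \zeta_{p_k}^{\pm \alpha_k},$$ where the signs of the exponents may be chosen independently.
   Context: Let $D>1$ be a square-free integer with $-D \equiv 2$ or $3 \pmod 4$, and assume the class group $C(-4D)$ of primitive positive-definite binary quadratic forms of discriminant $-4D$ is a free $\mathbb{Z}_2$-module, i.e. $C(-4D)\cong(\mathbb{Z}/2\mathbb{Z})^n$ for some $n\ge 0$. Let $G_D(\mathbb{Q}) := \{a + b\sqrt{-D} \in \mathbb{Q}[\sqrt{-D}] : a^2 + Db^2 = 1\}$, a group under multiplication. For each odd prime $q$ with Legendre symbol $\left(\frac{-D}{q}\right) = 1$, there exist unique positive integers $x_0, y_0$ with $\gcd(x_0,y_0)=1$ and $q^2 = x_0^2 + D y_0^2$; define $\zeta_q := \frac{x_0 + y_0\sqrt{-D}}{q} \in G_D(\mathbb{Q})$. *)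

theory Defs
  imports "HOL-Number_Theory.Number_Theory" "HOL-Computational_Algebra.Squarefree" "HOL-Analysis.Analysis"
begin

type_synonym bqf = "int \<times> int \<times> int"

fun bqf_eval :: "bqf \<Rightarrow> int \<Rightarrow> int \<Rightarrow> int" where
  "bqf_eval (a, b, c) x y = a * x^2 + b * x * y + c * y^2"

fun bqf_disc :: "bqf \<Rightarrow> int" where
  "bqf_disc (a, b, c) = b^2 - 4 * a * c"

fun bqf_primitive :: "bqf \<Rightarrow> bool" where
  "bqf_primitive (a, b, c) = (gcd a (gcd b c) = 1)"

fun bqf_posdef :: "bqf \<Rightarrow> bool" where
  "bqf_posdef (a, b, c) = (a > 0 \<and> b^2 - 4 * a * c < 0)"

definition bqf_forms :: "int \<Rightarrow> bqf set" where
  "bqf_forms Delta = {f. bqf_disc f = Delta \<and> bqf_primitive f \<and> bqf_posdef f}"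

definition bqf_equiv :: "bqf \<Rightarrow> bqf \<Rightarrow> bool" where
  "bqf_equiv f g = (\<exists>p q r s :: int. p * s - q * r = 1 \<and>
      (\<forall>x y. bqf_eval g x y = bqf_eval f (p * x + q * y) (r * x + s * y)))"

text \<open>Dirichlet composition (Cox, Lemma 3.2): if gcd(a,a',(b+b')/2) = 1, the composite of
  (a,b,c) and (a',b',c') of discriminant Delta is (aa', B, (B^2-Delta)/(4aa')) where
  B = b mod 2a, B = b' mod 2a', B^2 = Delta mod 4aa'.\<close>
definition dirichlet_comp :: "int \<Rightarrow> bqf \<Rightarrow> bqf \<Rightarrow> bqf \<Rightarrow> bool" where
  "dirichlet_comp Delta f g F = (case f of (a, b, c) \<Rightarrow> case g of (a', b', c') \<Rightarrow>
      even (b + b') \<and> gcd a (gcd a' ((b + b') div 2)) = 1 \<and>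
      (\<exists>B. [B = b] (mod 2 * a) \<and> [B = b'] (mod 2 * a') \<and> [B^2 = Delta] (mod 4 * a * a') \<and>
           F = (a * a', B, (B^2 - Delta) div (4 * a * a'))))"

text \<open>The class group C(Delta) is an elementary abelian 2-group (i.e. isomorphic to (Z/2Z)^n;
  it is always finite abelian), i.e. the square of every class is the principal class.
  For Delta = -4D the principal form is x^2 + D y^2.\<close>
definition class_group_elem2 :: "int \<Rightarrow> bool" where
  "class_group_elem2 D = (\<forall>f \<in> bqf_forms (-4 * D). \<forall>f' F.
      bqf_equiv f f' \<and> dirichlet_comp (-4 * D) f' f' F \<longrightarrow> bqf_equiv F (1, 0, D))"

text \<open>Q(sqrt(-D)) embedded in C with sqrt(-D) = i * sqrt D.\<close>
definition G_D :: "int \<Rightarrow> complex set" where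
  "G_D D = {of_real x + of_real y * \<i> * of_real (sqrt (of_int D)) | x y.
              x \<in> \<rat> \<and> y \<in> \<rat> \<and> x^2 + of_int D * y^2 = 1}"

definition zeta :: "int \<Rightarrow> int \<Rightarrow> complex" where
  "zeta D q = (case (THE (x0, y0). x0 > 0 \<and> y0 > 0 \<and> gcd x0 y0 = 1 \<and> q^2 = x0^2 + D * y0^2)
     of (x0, y0) \<Rightarrow> (of_int x0 + of_int y0 * \<i> * of_real (sqrt (of_int D))) / of_int q)"

end

theory Submission
  imports Defs
begin


definition condC :: "int \<Rightarrow> int \<Rightarrow> int \<Rightarrow> int \<Rightarrow> int \<Rightarrow> int \<Rightarrow> int \<Rightarrow> bool" where
  "condC D a b m X Y \<epsilon> = (m dvd a*X + \<epsilon>*D*b*Y \<and> m dvd b*X - \<epsilon>*a*Y)"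

lemma prime_sq_dvd_prod:
  fixes p u v :: int
  assumes "prime p" "p^2 dvd u* v" "\<not> (p dvd u \<and> p dvd v)"
  shows "p^2 dvd u \<or> p^2 dvd v"
proof (cases "p dvd u")
  case True
  then have "\<not> p dvd v" using assms by auto
  then have "coprime (p^2) v" using assms(1) by (simp add: prime_imp_coprime)
  then show ?thesis using assms(2) coprime_dvd_mult_left_iff by blast
next
  case False
  then have "coprime (p^2) u" using assms(1) by (simp add: prime_imp_coprime)
  then show ?thesis using assms(2) coprime_dvd_mult_right_iff by blast
qed

lemma key_exists:
  fixes D a b p X Y :: int
  assumes p: "prime p" "odd p" and nb: "\<not> p dvd b" and nX: "\<not> p dvd X"
    and h1: "p^2 dvd a^2 + D*b^2" and h2: "p^2 dvd X^2 + D*Y^2"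
  shows "\<exists>\<epsilon>\<in>{1,-1}. condC D a b (p^2) X Y \<epsilon>"
proof -
  define u where "u = b*X - a*Y"
  define v where "v = b*X + a*Y"
  have id: "u* v = b^2*(X^2 + D*Y^2) - Y^2*(a^2+D*b^2)"
    unfolding u_def v_def by (simp add: algebra_simps power2_eq_square)
  have "p^2 dvd u* v" unfolding id using h1 h2 by (simp add: dvd_diff)
  moreover have "\<not> (p dvd u \<and> p dvd v)"
  proof
    assume "p dvd u \<and> p dvd v"
    then have "p dvd u + v" by auto
    moreover have "u + v = 2*(b*X)" unfolding u_def v_def by simp
    ultimately have "p dvd 2 \<or> p dvd b*X" using p prime_dvd_mult_iff by metis
    moreover have "\<not> p dvd 2"
    proof
      assume "p dvd 2"
      then have "p \<le> 2" by (simp add: zdvd_imp_le)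
      moreover have "p > 1" using p(1) prime_gt_1_int by blast
      ultimately have "p = 2" by simp
      then show False using p(2) by simp
    qed
    ultimately show False using nb nX p prime_dvd_mult_iff by metis
  qed
  ultimately have "p^2 dvd u \<or> p^2 dvd v" using p prime_sq_dvd_prod by blast
  then show ?thesis
  proof
    assume hu: "p^2 dvd u"
    have "b*(a*X + 1*D*b*Y) = a*u + Y*(a^2+D*b^2)" unfolding u_def by (simp add: algebra_simps power2_eq_square)
    then have "p^2 dvd b*(a*X + 1*D*b*Y)" using hu h1 by simp
    moreover have "coprime (p^2) b" using p nb by (simp add: prime_imp_coprime)
    ultimately have "p^2 dvd a*X + 1*D*b*Y" using coprime_dvd_mult_right_iff by blast
    then show ?thesis using hu unfolding condC_def u_def by auto
  next
    assume hv: "p^2 dvd v"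
    have "b*(a*X + (-1)*D*b*Y) = a* v - Y*(a^2+D*b^2)" unfolding v_def by (simp add: algebra_simps power2_eq_square)
    moreover have "p^2 dvd a * v - Y*(a^2+D*b^2)" using hv h1 by (intro dvd_diff dvd_mult2 dvd_mult) auto
    ultimately have "p^2 dvd b*(a*X + (-1)*D*b*Y)" by simp
    moreover have "coprime (p^2) b" using p nb by (simp add: prime_imp_coprime)
    ultimately have "p^2 dvd a*X + (-1)*D*b*Y" using coprime_dvd_mult_right_iff by blast
    then show ?thesis using hv unfolding condC_def v_def by auto
  qed
qed

lemma odd_prime_not_dvd2:
  fixes p :: int assumes "prime p" "odd p" shows "\<not> p dvd 2"
proof
  assume "p dvd 2"
  then have "p \<le> 2" by (simp add: zdvd_imp_le)
  moreover have "p > 1" using assms(1) prime_gt_1_int by blast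
  ultimately have "p = 2" by simp
  then show False using assms(2) by simp
qed

lemma key_unique:
  fixes D a b p X Y :: int
  assumes p: "prime p" "odd p" and nb: "\<not> p dvd b" and nX: "\<not> p dvd X"
    and c1: "condC D a b (p^2) X Y 1" and c2: "condC D a b (p^2) X Y (-1)"
  shows False
proof -
  have "p dvd b*X - 1*a*Y" "p dvd b*X - (-1)*a*Y"
    using c1 c2 unfolding condC_def by (meson dvd_power dvd_trans zero_less_numeral)+
  then have "p dvd (b*X - 1*a*Y) + (b*X - (-1)*a*Y)" by (rule dvd_add)
  moreover have "(b*X - 1*a*Y) + (b*X - (-1)*a*Y) = 2*(b*X)" by simp
  ultimately have "p dvd 2 \<or> p dvd b*X" using p prime_dvd_mult_iff by metis
  then show False using odd_prime_not_dvd2[OF p] nb nX p prime_dvd_mult_iff by metis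
qed

lemma forward:
  fixes D a b a' b' u v m X Y e :: int
  assumes "a = a'*u - D*b'* v" "b = a'* v + b'*u" "condC D a' b' m X Y e"
  shows "condC D a b m X Y e"
proof -
  have i1: "a*X + e*D*b*Y = (a'*X + e*D*b'*Y)*u - D*(b'*X - e*a'*Y)* v"
    unfolding assms(1,2) by (simp add: algebra_simps)
  have i2: "b*X - e*a*Y = (b'*X - e*a'*Y)*u + (a'*X + e*D*b'*Y)* v"
    unfolding assms(1,2) by (simp add: algebra_simps)
  show ?thesis using assms(3) unfolding condC_def i1 i2 by auto
qed

lemma backward:
  fixes D a b a' b' x0 y0 m n X Y e \<epsilon> :: int
  assumes "m*a' = a*x0 + \<epsilon>*D*b*y0" "m*b' = b*x0 - \<epsilon>*a*y0" "condC D a b n X Y e"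
    and "coprime n m"
  shows "condC D a' b' n X Y e"
proof -
  have i1: "m*(a'*X + e*D*b'*Y) = (a*X + e*D*b*Y)*x0 + \<epsilon>*D*(b*X - e*a*Y)*y0"
  proof -
    have "m*(a'*X + e*D*b'*Y) = (m*a')*X + e*D*(m*b')*Y" by (simp add: algebra_simps)
    also have "\<dots> = (a*X + e*D*b*Y)*x0 + \<epsilon>*D*(b*X - e*a*Y)*y0"
      unfolding assms(1,2) by (simp add: algebra_simps)
    finally show ?thesis .
  qed
  have i2: "m*(b'*X - e*a'*Y) = (b*X - e*a*Y)*x0 - \<epsilon>*(a*X + e*D*b*Y)*y0"
  proof -
    have "m*(b'*X - e*a'*Y) = (m*b')*X - e*(m*a')*Y" by (simp add: algebra_simps)
    also have "\<dots> = (b*X - e*a*Y)*x0 - \<epsilon>*(a*X + e*D*b*Y)*y0"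
      unfolding assms(1,2) by (simp add: algebra_simps)
    finally show ?thesis .
  qed
  have "n dvd m*(a'*X + e*D*b'*Y)" "n dvd m*(b'*X - e*a'*Y)"
    using assms(3) unfolding condC_def i1 i2 by auto
  then show ?thesis using assms(4) unfolding condC_def
    by (simp add: coprime_dvd_mult_right_iff)
qed



lemma prime_not_dvd_of_rep:
  fixes D p x y :: int
  assumes "prime p" "\<not> p dvd D" "gcd x y = 1" "p^2 = x^2 + D*y^2"
  shows "\<not> p dvd x" "\<not> p dvd y"
proof -
  show nx: "\<not> p dvd x"
  proof
    assume "p dvd x"
    then have "p dvd D*y^2" using assms(4)
      by (metis dvd_add_right_iff dvd_power pos2 power2_eq_square dvd_mult2)
    then have "p dvd y" using assms(1,2) by (metis prime_dvd_mult_iff prime_dvd_power)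
    then have "p dvd gcd x y" using \<open>p dvd x\<close> by simp
    then have "p dvd 1" using assms(3) by simp
    then show False using assms(1) not_prime_unit by blast
  qed
  show "\<not> p dvd y"
  proof
    assume "p dvd y"
    have "x^2 = p^2 - D*y^2" using assms(4) by simp
    moreover have "p dvd p^2 - D*y^2" using \<open>p dvd y\<close> by (intro dvd_diff) (auto simp: power2_eq_square)
    ultimately have "p dvd x^2" by simp
    then have "p dvd x" using assms(1) prime_dvd_power by blast
    then show False using nx by simp
  qed
qed

lemma bound_helper:
  fixes A t P D :: int
  assumes "P > 0" "P \<le> \<bar>t\<bar>" "D > 1" "P*P = A^2 + D*t^2"
  shows False
proof -
  have "P*P \<le> \<bar>t\<bar>*\<bar>t\<bar>" using assms(1,2) by (intro mult_mono) auto
  also have "\<dots> = t^2" by (simp add: power2_eq_square)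
  finally have h1: "P*P \<le> t^2" .
  have h2: "2*t^2 \<le> D*t^2" using assms(3) by (intro mult_right_mono) auto
  have h3: "A^2 \<ge> 0" by simp
  have h4: "P*P > 0" using assms(1) by simp
  show False using h1 h2 h3 h4 assms(4) by linarith
qed

lemma rep_unique:
  fixes D p x y u v :: int
  assumes D: "D > 1" and p: "prime p" "odd p" "\<not> p dvd D"
    and pos: "x > 0" "y > 0" "u > 0" "v > 0"
    and g: "gcd x y = 1" "gcd u v = 1"
    and r1: "p^2 = x^2 + D*y^2" and r2: "p^2 = u^2 + D* v^2"
  shows "x = u \<and> y = v"
proof -
  have nx: "\<not> p dvd x" and ny: "\<not> p dvd y" using prime_not_dvd_of_rep[OF p(1,3) g(1) r1] by auto
  have nu: "\<not> p dvd u" and nv: "\<not> p dvd v" using prime_not_dvd_of_rep[OF p(1,3) g(2) r2] by auto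
  have prod: "(x * v - y*u)*(x * v + y*u) = p^2*(v^2 - y^2)"
  proof -
    have "(x * v - y*u)*(x * v + y*u) = x^2 * v^2 - u^2*y^2" by (simp add: algebra_simps power2_eq_square)
    also have "\<dots> = (x^2 + D*y^2) * v^2 - (u^2 + D * v^2)*y^2" by (simp add: algebra_simps power2_eq_square)
    also have "\<dots> = p^2 * v^2 - p^2*y^2" by (simp only: r1[symmetric] r2[symmetric])
    also have "\<dots> = p^2*(v^2 - y^2)" by (simp add: algebra_simps)
    finally show ?thesis .
  qed
  have "\<not> (p dvd x * v - y*u \<and> p dvd x * v + y*u)"
  proof
    assume "p dvd x * v - y*u \<and> p dvd x * v + y*u"
    then have "p dvd (x * v - y*u) + (x * v + y*u)" using dvd_add by blast
    moreover have "(x * v - y*u) + (x * v + y*u) = 2*(x * v)" by simp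
    ultimately have "p dvd 2 \<or> p dvd x * v" using p prime_dvd_mult_iff by metis
    then show False using odd_prime_not_dvd2[OF p(1,2)] nx nv p prime_dvd_mult_iff by metis
  qed
  moreover have "p^2 dvd (x * v - y*u)*(x * v + y*u)" unfolding prod by simp
  ultimately have "p^2 dvd x * v - y*u \<or> p^2 dvd x * v + y*u" using p prime_sq_dvd_prod by blast
  have pr: "p^2 * p^2 = (x^2+D*y^2)*(u^2+D * v^2)" using r1 r2 by metis
  have p4: "p^2 * p^2 = (x*u + D*y * v)^2 + D*(x * v - y*u)^2"
    "p^2 * p^2 = (x*u - D*y * v)^2 + D*(x * v + y*u)^2"
    unfolding pr by (simp_all add: algebra_simps power2_eq_square)
  have pp: "p^2 > 0" using p prime_gt_1_int by simp
  show ?thesis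
  proof (cases "p^2 dvd x * v - y*u")
    case True
    have "x * v - y*u = 0"
    proof (rule ccontr)
      assume ne: "x * v - y*u \<noteq> 0"
      have "p^2 \<le> \<bar>x * v - y*u\<bar>" using True ne by (simp add: zdvd_imp_le)
      then show False using bound_helper[OF pp _ D p4(1)] by blast
    qed
    then have e: "x * v = y*u" by simp
    have "x dvd y * u" using e by (metis dvd_triv_left)
    moreover have "coprime x y" using g(1) by (simp add: coprime_iff_gcd_eq_1)
    ultimately have "x dvd u" by (simp add: coprime_dvd_mult_right_iff)
    have "u dvd x * v" using e by (metis dvd_triv_right)
    moreover have "coprime u v" using g(2) by (simp add: coprime_iff_gcd_eq_1)
    ultimately have "u dvd x" by (simp add: coprime_dvd_mult_left_iff)
    have "x = u" using \<open>x dvd u\<close> \<open>u dvd x\<close> pos by (simp add: zdvd_antisym_nonneg)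
    then show ?thesis using e pos by simp
  next
    case False
    then have T: "p^2 dvd x * v + y*u" using \<open>_ \<or> _\<close> by blast
    have "x * v + y*u > 0" using pos by (simp add: add_pos_pos)
    then have "p^2 \<le> x * v + y*u" using T by (simp add: zdvd_imp_le)
    then have "p^2 \<le> \<bar>x * v + y*u\<bar>" by simp
    then show ?thesis using bound_helper[OF pp _ D p4(2)] by blast
  qed
qed



lemma rep_exists:
  fixes D p t :: int
  assumes cg: "class_group_elem2 D" and D: "D > 0" and p: "prime p" "odd p" "\<not> p dvd D"
    and t: "p^2 dvd t^2 + D"
  shows "\<exists>x0 y0. x0 > 0 \<and> y0 > 0 \<and> gcd x0 y0 = 1 \<and> p^2 = x0^2 + D*y0^2"
proof -
  obtain k where k: "t^2 + D = p^2 * k" using t by (auto elim: dvdE)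
  have p1: "p > 1" using p(1) prime_gt_1_int by blast
  have nt: "\<not> p dvd t"
  proof
    assume "p dvd t"
    then have "p dvd t^2" by (simp add: power2_eq_square)
    moreover have "p dvd t^2 + D" using k by (simp add: power2_eq_square)
    ultimately have "p dvd D" using dvd_add_right_iff by blast
    then show False using p(3) by simp
  qed
  have n2t: "\<not> p dvd 2*t" using odd_prime_not_dvd2[OF p(1,2)] nt p(1) prime_dvd_mult_iff by blast
  have cop: "coprime p (2*t)" using prime_imp_coprime[OF p(1) n2t] .
  have g1: "gcd p (gcd (2*t) z) = 1" for z
  proof -
    have "gcd p (gcd (2*t) z) dvd gcd p (2*t)" by (meson gcd_dvd1 gcd_dvd2 gcd_greatest dvd_trans)
    also have "gcd p (2*t) = 1" using cop by (simp add: coprime_iff_gcd_eq_1)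
    finally show ?thesis by simp
  qed
  define f where "f = (p, 2*t, p*k)"
  have disc: "(2*t)^2 - 4*p*(p*k) = -4*D"
  proof -
    have "4*p*(p*k) = 4*(t^2+D)" using k by (simp add: power2_eq_square algebra_simps)
    then show ?thesis by (simp add: algebra_simps power2_eq_square)
  qed
  have fin: "f \<in> bqf_forms (-4*D)"
    unfolding bqf_forms_def f_def using disc g1 p1 D by simp
  have feq: "bqf_equiv f f"
    unfolding bqf_equiv_def by (rule exI[of _ 1], rule exI[of _ 0], rule exI[of _ 0], rule exI[of _ 1]) simp
  define F where "F = (p*p, 2*t, ((2*t)^2 - (-4*D)) div (4*p*p))"
  have cg4: "[(2*t)^2 = -4*D] (mod 4*p*p)"
  proof -
    have "(2*t)^2 - (-4*D) = (4*p*p)*k" using k by (simp add: power2_eq_square algebra_simps)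
    then show ?thesis unfolding cong_iff_dvd_diff by simp
  qed
  have dc: "dirichlet_comp (-4*D) f f F"
    unfolding dirichlet_comp_def f_def F_def using g1 cg4 cop by (auto simp: coprime_iff_gcd_eq_1)
  have "bqf_equiv F (1, 0, D)"
    using cg fin feq dc unfolding class_group_elem2_def by blast
  then obtain P Q R S where det: "P*S - Q*R = 1"
    and ev: "\<And>x y. bqf_eval (1, 0, D) x y = bqf_eval F (P*x+Q*y) (R*x+S*y)"
    unfolding bqf_equiv_def by blast
  have "bqf_eval (1, 0, D) S (-R) = bqf_eval F (P*S+Q*(-R)) (R*S+S*(-R))" by (rule ev)
  moreover have "P*S+Q*(-R) = 1" using det by simp
  moreover have "R*S+S*(-R) = 0" by simp
  ultimately have rep: "S^2 + D*R^2 = p*p" unfolding F_def by simp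
  have gSR: "gcd S R = 1"
  proof -
    have "gcd S R dvd P*S - Q*R" by simp
    then have "gcd S R dvd 1" using det by simp
    then show ?thesis by simp
  qed
  have R0: "R \<noteq> 0"
  proof
    assume "R = 0"
    then have "S dvd 1" using det by (metis diff_zero dvd_triv_right mult_zero_right)
    then have "S^2 = 1" by (metis zdvd1_eq power2_abs power_one)
    then have "p*p = 1" using rep \<open>R = 0\<close> by simp
    then show False using p1 by (smt (verit) mult_less_cancel_left1)
  qed
  have S0: "S \<noteq> 0"
  proof
    assume "S = 0"
    then have "R dvd 1" using det by (metis add.inverse_inverse diff_0 dvd_triv_right minus_mult_left mult_zero_right dvd_minus_iff)
    then have "R^2 = 1" by (metis zdvd1_eq power2_abs power_one)
    then have "D = p*p" using rep \<open>S = 0\<close> by simp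
    then show False using p(3) by simp
  qed
  show ?thesis
    by (rule exI[of _ "\<bar>S\<bar>"], rule exI[of _ "\<bar>R\<bar>"]) (use rep gSR R0 S0 in \<open>simp add: power2_eq_square\<close>)
qed



definition tc :: "int \<Rightarrow> int \<Rightarrow> int \<Rightarrow> complex" where
  "tc D x y = of_int x + of_int y * \<i> * of_real (sqrt (of_int D))"

lemma tc_mult:
  assumes "D \<ge> 0"
  shows "tc D x y * tc D u v = tc D (x*u - D*y * v) (x * v + y*u)"
proof -
  define r where "r = complex_of_real (sqrt (of_int D))"
  have rr: "r * r = of_int D" unfolding r_def using assms
    by (metis of_real_mult of_real_of_int_eq real_sqrt_mult_self of_int_0_le_iff real_sqrt_pow2 power2_eq_square)
  have "tc D x y * tc D u v = of_int x * of_int u + (of_int x * of_int v + of_int y * of_int u) * \<i> * r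
        + of_int y * of_int v * (\<i> * \<i>) * (r * r)"
    unfolding tc_def r_def[symmetric] by (simp add: algebra_simps)
  also have "\<dots> = tc D (x*u - D*y * v) (x * v + y*u)"
    unfolding rr tc_def r_def[symmetric] by (simp add: algebra_simps)
  finally show ?thesis .
qed

lemma tc_conj:
  assumes "D \<ge> 0"
  shows "tc D x y * tc D x (-y) = of_int (x^2 + D*y^2)"
  using tc_mult[OF assms, of x y x "-y"] by (simp add: tc_def power2_eq_square algebra_simps)

lemma prod_count_add:
  fixes h :: "'a \<Rightarrow> 'b::comm_monoid_mult"
  shows "(\<Prod>q\<in>set_mset (add_mset p M). h q ^ count (add_mset p M) q) = h p * (\<Prod>q\<in>set_mset M. h q ^ count M q)"
proof -
  define A where "A = insert p (set_mset M)"
  have fA: "finite A" unfolding A_def by simp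
  have "(\<Prod>q\<in>set_mset (add_mset p M). h q ^ count (add_mset p M) q)
      = (\<Prod>q\<in>A. h q ^ count M q * (if q = p then h q else 1))"
    unfolding A_def by (rule prod.cong) (auto simp: power_add mult_ac)
  also have "\<dots> = (\<Prod>q\<in>A. h q ^ count M q) * (\<Prod>q\<in>A. (if q = p then h q else 1))"
    by (rule prod.distrib)
  also have "(\<Prod>q\<in>A. (if q = p then h q else 1)) = h p"
    using fA by (simp add: prod.delta A_def)
  also have "(\<Prod>q\<in>A. h q ^ count M q) = (\<Prod>q\<in>set_mset M. h q ^ count M q)"
    using fA by (intro prod.mono_neutral_right) (auto simp: A_def not_in_iff)
  finally show ?thesis by (simp add: mult.commute)
qed

lemma prod_pf_count:
  fixes h :: "int \<Rightarrow> 'b::comm_monoid_mult"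
  shows "(\<Prod>q\<in>prime_factors c. h q ^ multiplicity q c) = (\<Prod>q\<in>prime_factors c. h q ^ count (prime_factorization c) q)"
  by (rule prod.cong) (auto simp: count_prime_factorization_prime in_prime_factors_imp_prime)

lemma prod_pf_times_prime:
  fixes h :: "int \<Rightarrow> 'b::comm_monoid_mult"
  assumes "prime p" "c' \<noteq> 0"
  shows "(\<Prod>q\<in>prime_factors (p*c'). h q ^ multiplicity q (p*c')) = h p * (\<Prod>q\<in>prime_factors c'. h q ^ multiplicity q c')"
proof -
  have pf: "prime_factorization (p*c') = add_mset p (prime_factorization c')"
    using prime_factorization_times_prime[OF assms(2,1)] by simp
  have "(\<Prod>q\<in>prime_factors (p*c'). h q ^ multiplicity q (p*c'))
     = (\<Prod>q\<in>prime_factors (p*c'). h q ^ count (prime_factorization (p*c')) q)" by (rule prod_pf_count)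
  also have "\<dots> = h p * (\<Prod>q\<in>prime_factors c'. h q ^ count (prime_factorization c') q)"
    unfolding pf by (rule prod_count_add)
  also have "\<dots> = h p * (\<Prod>q\<in>prime_factors c'. h q ^ multiplicity q c')"
    by (simp only: prod_pf_count)
  finally show ?thesis .
qed

lemma zeta_eq:
  fixes D p x0 y0 :: int
  assumes D: "D > 1" and p: "prime p" "odd p" "\<not> p dvd D"
    and r: "x0 > 0" "y0 > 0" "gcd x0 y0 = 1" "p^2 = x0^2 + D*y0^2"
  shows "zeta D p = tc D x0 y0 / of_int p"
proof -
  have "(THE (x, y). x > 0 \<and> y > 0 \<and> gcd x y = 1 \<and> p^2 = x^2 + D*y^2) = (x0, y0)"
  proof (rule the_equality)
    show "case (x0, y0) of (x, y) \<Rightarrow> x > 0 \<and> y > 0 \<and> gcd x y = 1 \<and> p^2 = x^2 + D*y^2"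
      using r by simp
  next
    fix z assume "case z of (x, y) \<Rightarrow> x > 0 \<and> y > 0 \<and> gcd x y = 1 \<and> p^2 = x^2 + D*y^2"
    then obtain x y where z: "z = (x, y)" and h: "x > 0" "y > 0" "gcd x y = 1" "p^2 = x^2 + D*y^2"
      by (cases z) auto
    show "z = (x0, y0)" using rep_unique[OF D p h(1,2) r(1,2) h(3) r(3) h(4) r(4)] z by simp
  qed
  then show ?thesis unfolding zeta_def tc_def by simp
qed

lemma not_dvd_b:
  fixes q a b D :: int
  assumes "prime q" "gcd a b = 1" "q dvd a^2 + D*b^2"
  shows "\<not> q dvd b"
proof
  assume "q dvd b"
  then have "q dvd D*b^2" by (simp add: power2_eq_square)
  then have "q dvd a^2" using assms(3) dvd_add_left_iff by blast
  then have "q dvd a" using assms(1) prime_dvd_power by blast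
  then have "q dvd gcd a b" using \<open>q dvd b\<close> by simp
  then have "q dvd 1" using assms(2) by simp
  then show False using assms(1) not_prime_unit by blast
qed



lemma main_ind:
  fixes D :: int and X Y e :: "int \<Rightarrow> int"
  assumes D: "D > 1"
    and e: "\<And>p. e p \<in> {1,-1}"
  shows "(\<And>p. prime p \<Longrightarrow> p dvd c \<Longrightarrow> odd p \<and> \<not> p dvd D \<and> X p > 0 \<and> Y p > 0 \<and> gcd (X p) (Y p) = 1
             \<and> p^2 = (X p)^2 + D*(Y p)^2 \<and> zeta D p = tc D (X p) (Y p) / of_int p)
    \<Longrightarrow> (\<And>p. prime p \<Longrightarrow> p dvd c \<Longrightarrow> condC D a b (p^2) (X p) (Y p) (e p))
    \<Longrightarrow> gcd a b = 1 \<Longrightarrow> a^2 + D*b^2 = c^2 \<Longrightarrow> c > 0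
    \<Longrightarrow> \<exists>s\<in>{1,-1::complex}. tc D a b / of_int c = s * (\<Prod>p\<in>prime_factors c. (zeta D p powi e p) ^ multiplicity p c)"
proof (induction "nat c" arbitrary: c a b rule: less_induct)
  case less
  note props = less.prems(1) and cond = less.prems(2) and g = less.prems(3)
    and nrm = less.prems(4) and cpos = less.prems(5)
  show ?case
  proof (cases "c = 1")
    case True
    have b0: "b = 0"
    proof (rule ccontr)
      assume "b \<noteq> 0"
      then have "b^2 \<ge> 1" by (simp add: power2_eq_square) (smt (verit) mult_le_0_iff zero_less_mult_iff)
      then have "D*b^2 \<ge> D" using D by (smt (verit) mult_le_cancel_left1)
      moreover have "a^2 \<ge> 0" by simp
      moreover have "a^2 + D*b^2 = 1" using nrm True by simp
      ultimately show False using D by linarith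
    qed
    then have "a^2 = 1" using nrm True by simp
    then have a1: "a = 1 \<or> a = -1" using power2_eq_1_iff by blast
    show ?thesis
      by (rule bexI[of _ "of_int a"]) (use a1 True b0 in \<open>auto simp: tc_def\<close>)
  next
    case False
    then have c1: "c > 1" using cpos by simp
    have "\<not> is_unit c" using c1 by simp
    then obtain p where pc: "p dvd c" and pp: "prime p" using prime_divisor_exists[of c] c1 by auto
    obtain c' where cc: "c = p * c'" using pc by (auto elim: dvdE)
    have p1: "p > 1" using pp prime_gt_1_int by blast
    have c'pos: "c' > 0" using cc cpos p1 by (simp add: zero_less_mult_iff)
    have c'lt: "nat c' < nat c" using cc c'pos p1 by simp
    define \<epsilon> where "\<epsilon> = e p"
    define X0 where "X0 = X p"
    define Y0 where "Y0 = Y p"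
    have ee: "\<epsilon> * \<epsilon> = 1" using e[of p] unfolding \<epsilon>_def by auto
    have P: "odd p" "\<not> p dvd D" "X0 > 0" "Y0 > 0" "gcd X0 Y0 = 1" "p^2 = X0^2 + D*Y0^2"
      "zeta D p = tc D X0 Y0 / of_int p"
      using props[OF pp pc] unfolding X0_def Y0_def by auto
    have "condC D a b (p^2) X0 Y0 \<epsilon>" using cond[OF pp pc] unfolding X0_def Y0_def \<epsilon>_def .
    then obtain a' b' where ea: "a*X0 + \<epsilon>*D*b*Y0 = p^2 * a'" and eb: "b*X0 - \<epsilon>*a*Y0 = p^2*b'"
      unfolding condC_def by (auto elim!: dvdE)
    have p2: "p^2 \<noteq> 0" using p1 by simp
    have ha: "a = a'*X0 - D*b'*(\<epsilon>*Y0)"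
    proof -
      have "p^2 * (a'*X0 - D*b'*(\<epsilon>*Y0)) = (p^2*a')*X0 - D*(p^2*b')*\<epsilon>*Y0" by (simp add: algebra_simps)
      also have "\<dots> = (a*X0 + \<epsilon>*D*b*Y0)*X0 - D*(b*X0 - \<epsilon>*a*Y0)*\<epsilon>*Y0" by (simp only: ea eb)
      also have "\<dots> = a*(X0^2 + (\<epsilon>*\<epsilon>)*D*Y0^2)" by (simp add: algebra_simps power2_eq_square)
      also have "\<dots> = a * p^2" using ee P(6) by simp
      finally show ?thesis using p2 by (simp add: mult.commute)
    qed
    have hb: "b = a'*(\<epsilon>*Y0) + b'*X0"
    proof -
      have "p^2 * (a'*(\<epsilon>*Y0) + b'*X0) = (p^2*a')*\<epsilon>*Y0 + (p^2*b')*X0" by (simp add: algebra_simps)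
      also have "\<dots> = (a*X0 + \<epsilon>*D*b*Y0)*\<epsilon>*Y0 + (b*X0 - \<epsilon>*a*Y0)*X0" by (simp only: ea eb)
      also have "\<dots> = b*(X0^2 + (\<epsilon>*\<epsilon>)*D*Y0^2)" by (simp add: algebra_simps power2_eq_square)
      also have "\<dots> = b * p^2" using ee P(6) by simp
      finally show ?thesis using p2 by (simp add: mult.commute)
    qed
    have nrm': "a'^2 + D*b'^2 = c'^2"
    proof -
      have "(p^2*p^2) * (a'^2 + D*b'^2) = (p^2*a')^2 + D*(p^2*b')^2" by (simp add: algebra_simps power2_eq_square)
      also have "\<dots> = (a*X0 + \<epsilon>*D*b*Y0)^2 + D*(b*X0 - \<epsilon>*a*Y0)^2" by (simp only: ea eb)
      also have "\<dots> = (a^2 + D*b^2) * (X0^2 + (\<epsilon>*\<epsilon>)*D*Y0^2)" by (simp add: algebra_simps power2_eq_square)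
      also have "\<dots> = (p^2*p^2) * c'^2" using ee P(6) nrm cc by (simp add: algebra_simps power2_eq_square)
      finally show ?thesis using p2 by simp
    qed
    have g': "gcd a' b' = 1"
    proof -
      have "gcd a' b' dvd a" unfolding ha by simp
      moreover have "gcd a' b' dvd b" unfolding hb by simp
      ultimately have "gcd a' b' dvd gcd a b" by simp
      then show ?thesis using g by simp
    qed
    have cmult: "tc D a b = tc D a' b' * tc D X0 (\<epsilon>*Y0)"
      using tc_mult[of D a' b' X0 "\<epsilon>*Y0"] D ha hb by simp
    have nX0: "\<not> p dvd X0" using prime_not_dvd_of_rep[OF pp P(2) P(5) P(6)] by simp
    have nb: "\<not> p dvd b"
      using not_dvd_b[OF pp g] nrm pc by (metis dvd_mult2 power2_eq_square)
    have cond': "condC D a' b' (q^2) (X q) (Y q) (e q)" if qq: "prime q" "q dvd c'" for q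
    proof (cases "q = p")
      case True
      have nb': "\<not> p dvd b'"
        using not_dvd_b[OF pp g'] nrm' qq True by (metis dvd_mult2 power2_eq_square)
      have h1: "p^2 dvd a'^2 + D*b'^2" unfolding nrm' using qq True by (simp add: dvd_power_same)
      have h2: "p^2 dvd X0^2 + D*Y0^2" using P(6) by simp
      obtain \<epsilon>' where e': "\<epsilon>' \<in> {1,-1}" and ce': "condC D a' b' (p^2) X0 Y0 \<epsilon>'"
        using key_exists[OF pp P(1) nb' nX0 h1 h2] by blast
      have ce'2: "condC D a b (p^2) X0 Y0 \<epsilon>'" by (rule forward[OF ha hb ce'])
      have ce: "condC D a b (p^2) X0 Y0 \<epsilon>" using cond[OF pp pc] unfolding X0_def Y0_def \<epsilon>_def .
      have "\<epsilon>' = \<epsilon>"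
      proof (rule ccontr)
        assume "\<epsilon>' \<noteq> \<epsilon>"
        then have "(\<epsilon>' = 1 \<and> \<epsilon> = -1) \<or> (\<epsilon>' = -1 \<and> \<epsilon> = 1)" using e' e[of p] unfolding \<epsilon>_def by auto
        then show False using key_unique[OF pp P(1) nb nX0] ce ce'2 by auto
      qed
      then show ?thesis using ce' True unfolding X0_def Y0_def \<epsilon>_def by simp
    next
      case False
      have qc: "q dvd c" using qq cc by simp
      have cop: "coprime (q^2) (p^2)" using primes_coprime[OF qq(1) pp False] by simp
      show ?thesis
        by (rule backward[of "p^2" a' a X0 \<epsilon> D b Y0 b']) (use ea eb cond[OF qq(1) qc] cop in \<open>simp_all add: mult.commute\<close>)
    qed
    have props': "odd q \<and> \<not> q dvd D \<and> X q > 0 \<and> Y q > 0 \<and> gcd (X q) (Y q) = 1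
             \<and> q^2 = (X q)^2 + D*(Y q)^2 \<and> zeta D q = tc D (X q) (Y q) / of_int q"
      if "prime q" "q dvd c'" for q
      using props[of q] that cc by simp
    obtain s' where s': "s' \<in> {1,-1::complex}"
      and IH: "tc D a' b' / of_int c' = s' * (\<Prod>q\<in>prime_factors c'. (zeta D q powi e q) ^ multiplicity q c')"
      using less.hyps[OF _ props' cond' g' nrm' c'pos] c'lt cc by (metis nat_eq_iff2)
    have tcne: "tc D X0 Y0 \<noteq> 0"
    proof
      assume "tc D X0 Y0 = 0"
      then have "of_int (X0^2 + D*Y0^2) = (0::complex)" using tc_conj[of D X0 Y0] D by simp
      then show False using P(6) p2 by (metis of_int_eq_0_iff)
    qed
    have zpow: "zeta D p powi \<epsilon> = tc D X0 (\<epsilon>*Y0) / of_int p"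
    proof -
      have "\<epsilon> = 1 \<or> \<epsilon> = -1" using e[of p] unfolding \<epsilon>_def by auto
      then show ?thesis
      proof
        assume "\<epsilon> = 1" then show ?thesis using P(7) by simp
      next
        assume em: "\<epsilon> = -1"
        have cj0: "tc D X0 Y0 * tc D X0 (-Y0) = of_int (p^2)"
          using tc_conj[of D X0 Y0] D P(6) by simp
        have cj: "tc D X0 Y0 * tc D X0 (-Y0) = of_int p * of_int p"
          unfolding cj0 by (simp add: power2_eq_square)
        have "zeta D p powi \<epsilon> = of_int p / tc D X0 Y0" using em P(7) by (simp add: power_int_minus)
        also have "\<dots> = tc D X0 (-Y0) / of_int p"
          using tcne p1 cj by (simp add: field_simps)
        finally show ?thesis using em by simp
      qed
    qed
    have prodc: "(\<Prod>q\<in>prime_factors c. (zeta D q powi e q) ^ multiplicity q c)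
        = zeta D p powi \<epsilon> * (\<Prod>q\<in>prime_factors c'. (zeta D q powi e q) ^ multiplicity q c')"
      unfolding cc \<epsilon>_def using prod_pf_times_prime[OF pp, of c' "\<lambda>q. zeta D q powi e q"] c'pos by simp
    have "tc D a b / of_int c = (tc D a' b' / of_int c') * (tc D X0 (\<epsilon>*Y0) / of_int p)"
      unfolding cmult cc by simp
    also have "\<dots> = s' * (zeta D p powi \<epsilon> * (\<Prod>q\<in>prime_factors c'. (zeta D q powi e q) ^ multiplicity q c'))"
      unfolding IH zpow by (simp add: mult_ac)
    finally show ?thesis using s' prodc by auto
  qed
qed



lemma mod4_lemma:
  fixes a b D :: int
  assumes "(- D) mod 4 \<in> {2, 3}" "\<not> (even a \<and> even b)"
  shows "\<not> 4 dvd a^2 + D*b^2"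
proof
  assume h: "4 dvd a^2 + D*b^2"
  have "(- D) mod 4 = 2 \<or> (- D) mod 4 = 3" using assms(1) by blast
  then have dd: "D mod 4 = 1 \<or> D mod 4 = 2" by presburger
  define m where "m = D div 4"
  define d where "d = D mod 4"
  have Dm: "D = 4*m + d" unfolding m_def d_def by simp
  have dv: "d = 1 \<or> d = 2" using dd unfolding d_def .
  have r4: "\<not> 4 dvd (4*Q + r)" if "r = 1 \<or> r = 2 \<or> r = 3" for Q r :: int
  proof
    assume "4 dvd 4*Q + r"
    then have "4 dvd r" by (simp add: dvd_add_right_iff)
    then show False using that by auto
  qed
  show False
  proof (cases "even a")
    case True
    then obtain k where k: "a = 2*k" by (auto elim: evenE)
    have "odd b" using True assms(2) by blast
    then obtain l where l: "b = 2*l+1" by (auto elim: oddE)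
    have eq: "a^2 + D*b^2 = 4*(k^2 + D*(l^2+l) + m) + d"
      unfolding k l using Dm by (simp add: algebra_simps power2_eq_square)
    from h have "4 dvd 4*(k^2 + D*(l^2+l) + m) + d" unfolding eq .
    then show False using r4 dv by blast
  next
    case False
    then obtain k where k: "a = 2*k+1" by (auto elim: oddE)
    show False
    proof (cases "even b")
      case True
      then obtain l where l: "b = 2*l" by (auto elim: evenE)
      have eq: "a^2 + D*b^2 = 4*(k^2 + k + D*l^2) + 1"
        unfolding k l by (simp add: algebra_simps power2_eq_square)
      from h have "4 dvd 4*(k^2 + k + D*l^2) + 1" unfolding eq .
      then show False using r4 by blast
    next
      case False
      then obtain l where l: "b = 2*l+1" by (auto elim: oddE)
      have eq: "a^2 + D*b^2 = 4*(k^2 + k + D*(l^2+l) + m) + (1 + d)"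
        unfolding k l using Dm by (simp add: algebra_simps power2_eq_square)
      from h have "4 dvd 4*(k^2 + k + D*(l^2+l) + m) + (1 + d)" unfolding eq .
      moreover have "1 + d = 2 \<or> 1 + d = 3" using dv by auto
      ultimately show False using r4 by blast
    qed
  qed
qed

lemma prime_props:
  fixes D a b c p :: int
  assumes D: "D > 1" and sq: "squarefree D" and m4: "(- D) mod 4 \<in> {2, 3}"
    and g: "gcd a b = 1" and n: "a^2 + D*b^2 = c^2" and p: "prime p" "p dvd c"
  shows "odd p \<and> \<not> p dvd D \<and> \<not> p dvd b \<and> (\<exists>t. p^2 dvd t^2 + D)"
proof -
  have pc2: "p^2 dvd c^2" using p(2) by (simp add: dvd_power_same)
  have pc1: "p dvd a^2 + D*b^2" using pc2 n by (metis dvd_mult_left power2_eq_square)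
  have nb: "\<not> p dvd b" using not_dvd_b[OF p(1) g pc1] .
  have op: "odd p"
  proof
    assume "even p"
    then have "p = 2" using primes_dvd_imp_eq[OF two_is_prime p(1)] by simp
    then have "4 dvd a^2 + D*b^2" using pc2 n by simp
    moreover have "\<not> (even a \<and> even b)"
    proof
      assume "even a \<and> even b"
      then have "2 dvd gcd a b" by simp
      then show False using g by simp
    qed
    ultimately show False using mod4_lemma[OF m4] by blast
  qed
  have nD: "\<not> p dvd D"
  proof
    assume pD: "p dvd D"
    have "a^2 = c^2 - D*b^2" using n by simp
    moreover have "p dvd c^2 - D*b^2" using pD p(2) by (simp add: power2_eq_square)
    ultimately have "p dvd a^2" by simp
    then have "p dvd a" using p(1) prime_dvd_power by blast
    then have "p^2 dvd a^2" by (simp add: dvd_power_same)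
    moreover have "D*b^2 = c^2 - a^2" using n by simp
    ultimately have "p^2 dvd D*b^2" using pc2 by (simp add: dvd_diff)
    moreover have "coprime (p^2) (b^2)" using p(1) nb by (simp add: prime_imp_coprime)
    ultimately have "p^2 dvd D" using coprime_dvd_mult_left_iff by blast
    then have "p dvd 1" using sq squarefreeD by blast
    then show False using p(1) not_prime_unit by blast
  qed
  have "coprime b (p^2)" using prime_imp_coprime[OF p(1) nb] by (simp add: coprime_commute)
  then obtain b1 where b1: "[b*b1 = 1] (mod p^2)" using cong_solve_coprime_int by blast
  define t where "t = a*b1"
  have e1: "b^2*(t^2+D) - (a^2 + D*b^2) = a^2 * ((b*b1 - 1)*(b*b1+1))"
    unfolding t_def by (simp add: algebra_simps power2_eq_square)
  have "p^2 dvd b*b1 - 1" using b1 by (simp add: cong_iff_dvd_diff)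
  then have "p^2 dvd b^2*(t^2+D) - (a^2 + D*b^2)" unfolding e1 by simp
  moreover have "p^2 dvd a^2 + D*b^2" using n pc2 by simp
  ultimately have "p^2 dvd b^2*(t^2+D)" by (metis diff_add_cancel dvd_add)
  moreover have "coprime (p^2) (b^2)" using p(1) nb by (simp add: prime_imp_coprime)
  ultimately have "p^2 dvd t^2 + D" using coprime_dvd_mult_right_iff by blast
  then show ?thesis using op nD nb by blast
qed



theorem theorem3p6:
  fixes D a b c :: int
  assumes "D > 1" and "squarefree D" and "(- D) mod 4 \<in> {2, 3}"
    and "class_group_elem2 D"
    and "gcd a b = 1" and "c > 1"
    and "(of_int a + of_int b * \<i> * of_real (sqrt (of_int D))) / of_int c \<in> G_D D"
  shows "(\<forall>p \<in> prime_factors c. odd p \<and> Legendre (- D) p = 1) \<and>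
         (\<exists>s \<in> {1, -1 :: complex}. \<exists>e :: int \<Rightarrow> int. (\<forall>p. e p \<in> {1, -1}) \<and>
            (of_int a + of_int b * \<i> * of_real (sqrt (of_int D))) / of_int c
              = s * (\<Prod>p \<in> prime_factors c. zeta D p powi (e p * int (multiplicity p c))))"
proof -
  note D = assms(1) and sq = assms(2) and m4 = assms(3) and cg = assms(4) and g = assms(5)
    and c1 = assms(6)
  have zt: "(of_int a + of_int b * \<i> * of_real (sqrt (of_int D))) / of_int c = tc D a b / of_int c"
    unfolding tc_def ..
  define r where "r = sqrt (real_of_int D)"
  have r0: "r > 0" unfolding r_def using D by simp
  obtain x y :: real where zx: "tc D a b / of_int c = of_real x + of_real y * \<i> * of_real r"
    and xy: "x^2 + of_int D * y^2 = 1"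
    using assms(7) unfolding G_D_def zt r_def by blast
  have cne: "complex_of_int c \<noteq> 0" using c1 by simp
  have e: "complex_of_int a + complex_of_int b * \<i> * complex_of_real r
      = complex_of_int c * (complex_of_real x + complex_of_real y * \<i> * complex_of_real r)"
    using zx cne unfolding tc_def r_def by (simp add: field_simps)
  have ea: "real_of_int a = real_of_int c * x" using arg_cong[OF e, of Re] by simp
  have "real_of_int b * r = real_of_int c * y * r" using arg_cong[OF e, of Im] by simp
  then have eb: "real_of_int b = real_of_int c * y" using r0 by simp
  have "real_of_int (a^2 + D*b^2) = real_of_int (c^2) * (x^2 + of_int D * y^2)"
    using ea eb by (simp add: algebra_simps power2_eq_square)
  then have nrm: "a^2 + D*b^2 = c^2" using xy by (metis mult.right_neutral of_int_eq_iff)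
  have PP: "odd p \<and> \<not> p dvd D \<and> \<not> p dvd b \<and> (\<exists>t. p^2 dvd t^2 + D)" if "prime p" "p dvd c" for p
    using prime_props[OF D sq m4 g nrm that] .
  have "\<forall>p. \<exists>xy. prime p \<and> p dvd c \<longrightarrow>
      (fst xy > 0 \<and> snd xy > 0 \<and> gcd (fst xy) (snd xy) = 1 \<and> p^2 = (fst xy)^2 + D*(snd xy)^2)"
  proof
    fix p
    show "\<exists>xy. prime p \<and> p dvd c \<longrightarrow>
      (fst xy > 0 \<and> snd xy > 0 \<and> gcd (fst xy) (snd xy) = 1 \<and> p^2 = (fst xy)^2 + D*(snd xy)^2)"
    proof (cases "prime p \<and> p dvd c")
      case True
      then obtain t where t: "p^2 dvd t^2 + D" using PP by blast
      have pp: "prime p" and pc: "p dvd c" using True by auto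
      have op: "odd p" and nD: "\<not> p dvd D" using PP[OF pp pc] by auto
      have D0: "D > 0" using D by simp
      have ex: "\<exists>x0 y0. x0 > 0 \<and> y0 > 0 \<and> gcd x0 y0 = 1 \<and> p^2 = x0^2 + D*y0^2"
        by (rule rep_exists[OF cg D0 pp op nD t])
      then obtain x0 y0 where h: "x0 > 0 \<and> y0 > 0 \<and> gcd x0 y0 = 1 \<and> p^2 = x0^2 + D*y0^2"
        by (elim exE)
      show ?thesis
      proof (rule exI[of _ "(x0, y0)"])
        show "prime p \<and> p dvd c \<longrightarrow> (fst (x0, y0) > 0 \<and> snd (x0, y0) > 0 \<and> gcd (fst (x0, y0)) (snd (x0, y0)) = 1 \<and> p^2 = (fst (x0, y0))^2 + D*(snd (x0, y0))^2)"
          using h by (simp only: fst_conv snd_conv) (intro impI conjI TrueI refl)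
      qed
    next
      case False
      then show ?thesis by blast
    qed
  qed
  from choice[OF this] obtain XY where XY0: "\<forall>p. prime p \<and> p dvd c \<longrightarrow>
      (fst (XY p) > 0 \<and> snd (XY p) > 0 \<and> gcd (fst (XY p)) (snd (XY p)) = 1 \<and> p^2 = (fst (XY p))^2 + D*(snd (XY p))^2)"
    by blast
  have XY: "fst (XY p) > 0 \<and> snd (XY p) > 0 \<and> gcd (fst (XY p)) (snd (XY p)) = 1 \<and> p^2 = (fst (XY p))^2 + D*(snd (XY p))^2"
    if "prime p \<and> p dvd c" for p using XY0 that by blast
  define X where "X p = fst (XY p)" for p
  define Y where "Y p = snd (XY p)" for p
  have props: "odd p \<and> \<not> p dvd D \<and> X p > 0 \<and> Y p > 0 \<and> gcd (X p) (Y p) = 1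
             \<and> p^2 = (X p)^2 + D*(Y p)^2 \<and> zeta D p = tc D (X p) (Y p) / of_int p"
    if "prime p" "p dvd c" for p
  proof -
    have h: "X p > 0" "Y p > 0" "gcd (X p) (Y p) = 1" "p^2 = (X p)^2 + D*(Y p)^2"
      using XY[of p] that unfolding X_def Y_def by auto
    have "odd p" "\<not> p dvd D" using PP[OF that] by auto
    then show ?thesis using h zeta_eq[OF D that(1) \<open>odd p\<close> \<open>\<not> p dvd D\<close> h] by simp
  qed
  have "\<forall>p. \<exists>\<epsilon>. \<epsilon> \<in> {1,-1} \<and> (prime p \<and> p dvd c \<longrightarrow> condC D a b (p^2) (X p) (Y p) \<epsilon>)"
  proof
    fix p
    show "\<exists>\<epsilon>. \<epsilon> \<in> {1,-1} \<and> (prime p \<and> p dvd c \<longrightarrow> condC D a b (p^2) (X p) (Y p) \<epsilon>)"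
    proof (cases "prime p \<and> p dvd c")
      case True
      then have pp: "prime p" and pc: "p dvd c" by auto
      have P: "odd p \<and> \<not> p dvd D \<and> X p > 0 \<and> Y p > 0 \<and> gcd (X p) (Y p) = 1
             \<and> p^2 = (X p)^2 + D*(Y p)^2" using props[OF pp pc] by simp
      have nb: "\<not> p dvd b" using PP[OF pp pc] by simp
      have nX: "\<not> p dvd X p" using prime_not_dvd_of_rep[OF pp, of D "X p" "Y p"] P by simp
      have h1: "p^2 dvd a^2 + D*b^2" unfolding nrm using pc by (simp add: dvd_power_same)
      have h2: "p^2 dvd (X p)^2 + D*(Y p)^2" using P by simp
      show ?thesis using key_exists[OF pp _ nb nX h1 h2] P by blast
    qed auto
  qed
  from choice[OF this] obtain e where e0: "\<forall>p. e p \<in> {1,-1} \<and> (prime p \<and> p dvd c \<longrightarrow> condC D a b (p^2) (X p) (Y p) (e p))"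
    by blast
  have e: "e p \<in> {1,-1}" for p using e0 by blast
  have cond: "condC D a b (p^2) (X p) (Y p) (e p)" if "prime p" "p dvd c" for p using e0 that by blast
  obtain s where s: "s \<in> {1,-1::complex}"
    and main: "tc D a b / of_int c = s * (\<Prod>p\<in>prime_factors c. (zeta D p powi e p) ^ multiplicity p c)"
  proof -
    have c0: "c > 0" using c1 by simp
    show ?thesis using main_ind[OF D e props cond g nrm c0] that by blast
  qed
  have pw: "(\<Prod>p\<in>prime_factors c. (zeta D p powi e p) ^ multiplicity p c)
      = (\<Prod>p\<in>prime_factors c. zeta D p powi (e p * int (multiplicity p c)))"
    by (rule prod.cong) (simp_all add: power_int_mult)
  have part2: "\<exists>s \<in> {1, -1 :: complex}. \<exists>e :: int \<Rightarrow> int. (\<forall>p. e p \<in> {1, -1}) \<and>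
            (of_int a + of_int b * \<i> * of_real (sqrt (of_int D))) / of_int c
              = s * (\<Prod>p \<in> prime_factors c. zeta D p powi (e p * int (multiplicity p c)))"
  proof (rule bexI[OF _ s], rule exI[of _ e], intro conjI allI)
    fix p show "e p \<in> {1,-1}" by (rule e)
  next
    show "(of_int a + of_int b * \<i> * of_real (sqrt (of_int D))) / of_int c
              = s * (\<Prod>p \<in> prime_factors c. zeta D p powi (e p * int (multiplicity p c)))"
      by (simp only: zt main pw)
  qed
  have part1: "\<forall>p \<in> prime_factors c. odd p \<and> Legendre (- D) p = 1"
  proof
    fix p assume "p \<in> prime_factors c"
    then have pp: "prime p" and pc: "p dvd c" by (auto simp: in_prime_factors_iff)
    obtain t where t: "p^2 dvd t^2 + D" and op: "odd p" and nD: "\<not> p dvd D" using PP[OF pp pc] by blast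
    have "p dvd t^2 + D" using t by (metis dvd_mult_left power2_eq_square)
    then have q: "[t^2 = -D] (mod p)" by (simp add: cong_iff_dvd_diff)
    have "\<not> [-D = 0] (mod p)" using nD by (simp add: cong_iff_dvd_diff)
    moreover have "QuadRes p (-D)" unfolding QuadRes_def using q by blast
    ultimately show "odd p \<and> Legendre (- D) p = 1" using op unfolding Legendre_def by simp
  qed
  show ?thesis using part1 part2 by blast
qed


end
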